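(* Consider the optimization problem MinE: $$\min_{\kappa,\bm{d},\bm{p},\bm{x}}\ \bm{p}^{\mathsf T}\bm{x}=\sum_{i\in\mathcal{I}}p_ix_i$$ subject to: - $\bm{x}=\bm{f}(\bm{h}(\bm{x},\bm{p},\kappa),\bm{d},\kappa)$; - $0<p_i\le p^{max}_i$ for all $i$; - $d_j\ge d^{min}_j$ for all $j$; - $0<x_i\le 1$ for all $i$; - $\kappa\in\{0,1\}^{n\times m}$ with every UE served by at least one cell. Here $\bm{p}^{max}\in\mathbb{R}^n_{>0}$ and $\bm{d}^{min}\in\mathbb{R}^m_{>0}$ are given. Then $\bm{d}=\bm{d}^{min}$ is optimal for MinE: the optimal (infimal) value of MinE is unchanged when the additional constraint $\bm{d}=\bm{d}^{min}$ is imposed.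
   Context: Cellular network model. $\mathcal{I}$ is a set of $n$ cells and $\mathcal{J}$ a set of $m$ UEs. For an association $\kappa\in\{0,1\}^{n\times m}$, let $\mathcal{I}_j=\{i:\kappa_{ij}=1\}$ and $\mathcal{J}_i=\{j:\kappa_{ij}=1\}$. $M,B>0$ are constants, $\sigma^2>0$ is the noise power and $g_{ij}>0$ are the channel gains. For a load vector $\bm{x}\in\mathbb{R}^n_{\ge0}$, a power vector $\bm{p}\in\mathbb{R}^n_{>0}$ and a demand vector $\bm{d}\in\mathbb{R}^m_{>0}$: - the SINR of UE $j$ is $h_j(\bm{x},\bm{p},\kappa)=\dfrac{\sum_{i\in\mathcal{I}_j}p_ig_{ij}}{\sum_{k\in\mathcal{I}\setminus\mathcal{I}_j}p_kg_{kj}x_k+\sigma^2}$; - the load of cell $i$ is $f_i(\bm{\gamma},\bm{d},\kappa)=\sum_{j\in\mathcal{J}_i}\dfrac{d_j}{MB\log_2(1+\gamma_j)}$; - $\bm{h}=(h_1,\dots,h_m)$ and $\bm{f}=(f_1,\dots,f_n)$. It is known, and assumed here, that for fixed $\bm{p},\bm{d},\kappa$ the map $\bm{x}\mapsto\bm{f}(\bm{h}(\bm{x},\bm{p},\kappa),\bm{d},\kappa)$ is a standard interference function with a unique fixed point. *)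

theory Defs
  imports Complex_Main
begin

text \<open>Cells are elements of a finite type 'c (the set I = UNIV), UEs elements of a
finite type 'u (the set J = UNIV). An association kappa is a 0/1 matrix, encoded
as a boolean relation: kappa i j = True iff kappa_ij = 1.\<close>

definition cells_of :: "('c \<Rightarrow> 'u \<Rightarrow> bool) \<Rightarrow> 'u \<Rightarrow> 'c set" where
  "cells_of \<kappa> j = {i. \<kappa> i j}"

definition ues_of :: "('c \<Rightarrow> 'u \<Rightarrow> bool) \<Rightarrow> 'c \<Rightarrow> 'u set" where
  "ues_of \<kappa> i = {j. \<kappa> i j}"

definition sinr ::
  "('c::finite \<Rightarrow> 'u \<Rightarrow> real) \<Rightarrow> real \<Rightarrow> ('c \<Rightarrow> real) \<Rightarrow> ('c \<Rightarrow> real)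
     \<Rightarrow> ('c \<Rightarrow> 'u \<Rightarrow> bool) \<Rightarrow> 'u \<Rightarrow> real" where
  "sinr g \<sigma>2 x p \<kappa> j =
     (\<Sum>i\<in>cells_of \<kappa> j. p i * g i j) /
     ((\<Sum>k\<in>UNIV - cells_of \<kappa> j. p k * g k j * x k) + \<sigma>2)"

definition load ::
  "real \<Rightarrow> real \<Rightarrow> ('u::finite \<Rightarrow> real) \<Rightarrow> ('u \<Rightarrow> real)
     \<Rightarrow> ('c \<Rightarrow> 'u \<Rightarrow> bool) \<Rightarrow> 'c \<Rightarrow> real" where
  "load M B \<gamma> d \<kappa> i = (\<Sum>j\<in>ues_of \<kappa> i. d j / (M * B * log 2 (1 + \<gamma> j)))"

definition MinE_feasible ::
  "real \<Rightarrow> real \<Rightarrow> real \<Rightarrow> ('c::finite \<Rightarrow> 'u::finite \<Rightarrow> real)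
     \<Rightarrow> ('c \<Rightarrow> real) \<Rightarrow> ('u \<Rightarrow> real)
     \<Rightarrow> (('c \<Rightarrow> 'u \<Rightarrow> bool) \<times> ('u \<Rightarrow> real) \<times> ('c \<Rightarrow> real) \<times> ('c \<Rightarrow> real)) set" where
  "MinE_feasible M B \<sigma>2 g pmax dmin =
     {(\<kappa>, d, p, x).
        (\<forall>i. x i = load M B (sinr g \<sigma>2 x p \<kappa>) d \<kappa> i) \<and>
        (\<forall>i. 0 < p i \<and> p i \<le> pmax i) \<and>
        (\<forall>j. d j \<ge> dmin j) \<and>
        (\<forall>i. 0 < x i \<and> x i \<le> 1) \<and>
        (\<forall>j. cells_of \<kappa> j \<noteq> {})}"

definition energy :: "('c::finite \<Rightarrow> real) \<Rightarrow> ('c \<Rightarrow> real) \<Rightarrow> real" where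
  "energy p x = (\<Sum>i\<in>UNIV. p i * x i)"

end

theory Submission
  imports Defs
begin

lemma sinr_pos:
  fixes g :: "'c::finite \<Rightarrow> 'u \<Rightarrow> real"
  assumes "cells_of \<kappa> j \<noteq> {}" "\<And>i. p i > 0" "\<And>i j. g i j > 0" "\<sigma>2 > 0" "\<And>i. y i \<ge> 0"
  shows "sinr g \<sigma>2 y p \<kappa> j > 0"
proof -
  have "(\<Sum>i\<in>cells_of \<kappa> j. p i * g i j) > 0"
    using assms by (intro sum_pos) auto
  moreover have "(\<Sum>k\<in>UNIV - cells_of \<kappa> j. p k * g k j * y k) \<ge> 0"
  proof (rule sum_nonneg)
    fix k
    have "0 \<le> p k * g k j" using assms(2)[of k] assms(3)[of k j] by simp
    then show "0 \<le> p k * g k j * y k" using assms(5)[of k] by simp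
  qed
  ultimately show ?thesis using assms unfolding sinr_def by (simp add: add_nonneg_pos)
qed

lemma sinr_anti:
  fixes g :: "'c::finite \<Rightarrow> 'u \<Rightarrow> real"
  assumes "cells_of \<kappa> j \<noteq> {}" "\<And>i. p i > 0" "\<And>i j. g i j > 0" "\<sigma>2 > 0" "\<And>i. y i \<ge> 0"
    "\<And>i. y i \<le> z i"
  shows "sinr g \<sigma>2 z p \<kappa> j \<le> sinr g \<sigma>2 y p \<kappa> j"
proof -
  have N: "(\<Sum>i\<in>cells_of \<kappa> j. p i * g i j) > 0"
    using assms by (intro sum_pos) auto
  have Dy: "(\<Sum>k\<in>UNIV - cells_of \<kappa> j. p k * g k j * y k) \<ge> 0"
  proof (rule sum_nonneg)
    fix k
    have "0 \<le> p k * g k j" using assms(2)[of k] assms(3)[of k j] by simp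
    then show "0 \<le> p k * g k j * y k" using assms(5)[of k] by simp
  qed
  have le: "(\<Sum>k\<in>UNIV - cells_of \<kappa> j. p k * g k j * y k) \<le> (\<Sum>k\<in>UNIV - cells_of \<kappa> j. p k * g k j * z k)"
  proof (rule sum_mono)
    fix k
    have "0 \<le> p k * g k j" using assms(2)[of k] assms(3)[of k j] by simp
    then show "p k * g k j * y k \<le> p k * g k j * z k" using assms(6)[of k] by (rule mult_left_mono[rotated])
  qed
  show ?thesis unfolding sinr_def
    apply (rule divide_left_mono)
    using N Dy le assms(4) by auto
qed

lemma load_mono:
  fixes g :: "'c::finite \<Rightarrow> 'u::finite \<Rightarrow> real"
  assumes "\<And>j. cells_of \<kappa> j \<noteq> {}" "\<And>i. p i > 0" "\<And>i j. g i j > 0" "\<sigma>2 > 0" "\<And>i. y i \<ge> 0"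
    "\<And>i. y i \<le> z i" "M > 0" "B > 0" "\<And>j. 0 < d' j" "\<And>j. d' j \<le> d j"
  shows "load M B (sinr g \<sigma>2 y p \<kappa>) d' \<kappa> i \<le> load M B (sinr g \<sigma>2 z p \<kappa>) d \<kappa> i"
  unfolding load_def
proof (rule sum_mono)
  fix j
  have zpos: "\<And>i. z i \<ge> 0" using assms(5,6) order_trans by blast
  have sz: "sinr g \<sigma>2 z p \<kappa> j > 0" using sinr_pos[OF assms(1-4) zpos] .
  have sy: "sinr g \<sigma>2 z p \<kappa> j \<le> sinr g \<sigma>2 y p \<kappa> j" using sinr_anti[OF assms(1-6)] .
  have lz: "log 2 (1 + sinr g \<sigma>2 z p \<kappa> j) > 0" using sz by simp
  have lzy: "log 2 (1 + sinr g \<sigma>2 z p \<kappa> j) \<le> log 2 (1 + sinr g \<sigma>2 y p \<kappa> j)"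
    using sz sy by simp
  have MB: "M * B > 0" using assms by simp
  show "d' j / (M * B * log 2 (1 + sinr g \<sigma>2 y p \<kappa> j)) \<le> d j / (M * B * log 2 (1 + sinr g \<sigma>2 z p \<kappa> j))"
    apply (rule frac_le)
    using assms(9,10)[of j] MB lz lzy by (auto intro!: mult_left_mono)
qed

lemma load_pos:
  fixes g :: "'c::finite \<Rightarrow> 'u::finite \<Rightarrow> real"
  assumes "\<And>j. cells_of \<kappa> j \<noteq> {}" "\<And>i. p i > 0" "\<And>i j. g i j > 0" "\<sigma>2 > 0" "\<And>i. y i \<ge> 0"
    "M > 0" "B > 0" "\<And>j. 0 < d j" "ues_of \<kappa> i \<noteq> {}"
  shows "load M B (sinr g \<sigma>2 y p \<kappa>) d \<kappa> i > 0"
  unfolding load_def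
proof (rule sum_pos)
  show "finite (ues_of \<kappa> i)" by simp
  show "ues_of \<kappa> i \<noteq> {}" by fact
  fix j
  have sz: "sinr g \<sigma>2 y p \<kappa> j > 0" using sinr_pos[OF assms(1-5)] .
  then have "log 2 (1 + sinr g \<sigma>2 y p \<kappa> j) > 0" by simp
  then show "0 < d j / (M * B * log 2 (1 + sinr g \<sigma>2 y p \<kappa> j))"
    using assms(6,7) assms(8)[of j] by simp
qed

lemma exists_dmin:
  fixes M B \<sigma>2 :: real
    and g :: "'c::finite \<Rightarrow> 'u::finite \<Rightarrow> real"
    and pmax :: "'c \<Rightarrow> real" and dmin :: "'u \<Rightarrow> real"
  assumes "M > 0" "B > 0" "\<sigma>2 > 0"
    and "\<And>i j. g i j > 0"
    and "\<And>j. dmin j > 0"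
    and F: "(\<kappa>, d, p, x) \<in> MinE_feasible M B \<sigma>2 g pmax dmin"
  shows "\<exists>x'. (\<kappa>, dmin, p, x') \<in> MinE_feasible M B \<sigma>2 g pmax dmin \<and> energy p x' \<le> energy p x"
proof -
  note FF = F[unfolded MinE_feasible_def, simplified]
  have fx: "\<And>i. x i = load M B (sinr g \<sigma>2 x p \<kappa>) d \<kappa> i" using FF by blast
  have pp: "\<And>i. 0 < p i" "\<And>i. p i \<le> pmax i" using FF by auto
  have dd: "\<And>j. dmin j \<le> d j" using FF by auto
  have xx: "\<And>i. 0 < x i" "\<And>i. x i \<le> 1" using FF by auto
  have cc: "\<And>j. cells_of \<kappa> j \<noteq> {}" using FF by auto
  have uu: "\<And>i. ues_of \<kappa> i \<noteq> {}"
  proof -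
    fix i show "ues_of \<kappa> i \<noteq> {}"
      using fx[of i] xx(1)[of i] unfolding load_def by auto
  qed
  define G where "G y i = load M B (sinr g \<sigma>2 y p \<kappa>) dmin \<kappa> i" for y i
  have Gmono: "G y i \<le> G z i" if "\<And>i. 0 \<le> y i" "\<And>i. y i \<le> z i" for y z i
    unfolding G_def
    by (rule load_mono[OF cc pp(1) assms(4,3) that assms(1,2) assms(5)]) simp
  have Gpos: "G y i > 0" if "\<And>i. 0 \<le> y i" for y i
    unfolding G_def by (rule load_pos[OF cc pp(1) assms(4,3) that assms(1,2,5) uu])
  define S where "S = {y. (\<forall>i. 0 \<le> y i \<and> y i \<le> x i) \<and> (\<forall>i. G y i \<le> y i)}"
  have xG: "G x i \<le> x i" for i
  proof -
    have "G x i \<le> load M B (sinr g \<sigma>2 x p \<kappa>) d \<kappa> i"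
      unfolding G_def
      by (rule load_mono[OF cc pp(1) assms(4,3) _ _ assms(1,2) assms(5) dd])
         (simp_all add: less_imp_le xx(1))
    then show ?thesis using fx[of i] by simp
  qed
  have xS: "x \<in> S"
  proof -
    have "\<forall>i. 0 \<le> x i \<and> x i \<le> x i" using xx(1) by (simp add: less_imp_le)
    then show ?thesis unfolding S_def using xG by simp
  qed
  define ys where "ys i = Inf ((\<lambda>y. y i) ` S)" for i
  have bdd: "bdd_below ((\<lambda>y. y i) ` S)" for i
    unfolding S_def by (rule bdd_belowI[of _ 0]) auto
  have ne: "(\<lambda>y. y i) ` S \<noteq> {}" for i using xS by auto
  have ys_le: "ys i \<le> y i" if "y \<in> S" for y i
    unfolding ys_def using bdd that by (intro cInf_lower) auto
  have ys_nn: "0 \<le> ys i" for i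
    unfolding ys_def using ne by (intro cInf_greatest) (auto simp: S_def)
  have ys_x: "ys i \<le> x i" for i using ys_le[OF xS] .
  have G1: "G ys i \<le> ys i" for i
    unfolding ys_def[of i]
  proof (rule cInf_greatest[OF ne])
    fix v assume "v \<in> (\<lambda>y. y i) ` S"
    then obtain y where y: "y \<in> S" "v = y i" by auto
    have "G ys i \<le> G y i" by (rule Gmono[OF ys_nn ys_le[OF y(1)]])
    also have "\<dots> \<le> y i" using y(1) by (auto simp: S_def)
    finally show "G ys i \<le> v" using y by simp
  qed
  have g1: "0 \<le> G ys i" for i by (rule less_imp_le[OF Gpos[OF ys_nn]])
  have g2: "G ys i \<le> x i" for i using G1[of i] ys_x[of i] by simp
  have g3: "G (G ys) i \<le> G ys i" for i
    by (rule Gmono[OF g1 G1])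
  have GysS: "G ys \<in> S"
    unfolding S_def using g1 g2 g3 by auto
  have eq: "ys i = G ys i" for i using ys_le[OF GysS, of i] G1[of i] by simp
  show ?thesis
  proof (intro exI conjI)
    show "(\<kappa>, dmin, p, ys) \<in> MinE_feasible M B \<sigma>2 g pmax dmin"
      unfolding MinE_feasible_def
    proof (simp, intro conjI allI)
      fix i
      show "ys i = load M B (sinr g \<sigma>2 ys p \<kappa>) dmin \<kappa> i" using eq[of i] by (simp add: G_def)
      show "0 < p i" "p i \<le> pmax i" using pp by auto
      show "0 < ys i" using eq[of i] Gpos[OF ys_nn] by simp
      show "ys i \<le> 1" using ys_x[of i] xx(2)[of i] by simp
    next
      fix j show "cells_of \<kappa> j \<noteq> {}" using cc by auto
    qed
    show "energy p ys \<le> energy p x"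
      unfolding energy_def
      by (rule sum_mono, rule mult_left_mono[OF ys_x less_imp_le[OF pp(1)]])
  qed
qed

theorem proposition3:
  fixes M B \<sigma>2 :: real
    and g :: "'c::finite \<Rightarrow> 'u::finite \<Rightarrow> real"
    and pmax :: "'c \<Rightarrow> real" and dmin :: "'u \<Rightarrow> real"
  assumes "M > 0" "B > 0" "\<sigma>2 > 0"
    and "\<And>i j. g i j > 0"
    and "\<And>i. pmax i > 0" "\<And>j. dmin j > 0"
  shows "(INF (\<kappa>, d, p, x) \<in> MinE_feasible M B \<sigma>2 g pmax dmin. energy p x)
       = (INF (\<kappa>, d, p, x) \<in> {s \<in> MinE_feasible M B \<sigma>2 g pmax dmin. fst (snd s) = dmin}.
            energy p x)"
proof -
  let ?A = "MinE_feasible M B \<sigma>2 g pmax dmin"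
  let ?B = "{s \<in> ?A. fst (snd s) = dmin}"
  let ?f = "\<lambda>(\<kappa>::'c \<Rightarrow> 'u \<Rightarrow> bool, d::'u\<Rightarrow>real, p::'c\<Rightarrow>real, x::'c\<Rightarrow>real). energy p x"
  have nn: "?f s \<ge> 0" if "s \<in> ?A" for s
  proof -
    obtain k d p x where s: "s = (k, d, p, x)" by (cases s) auto
    have "\<forall>i. 0 < p i" "\<forall>i. 0 < x i" using that s unfolding MinE_feasible_def by auto
    then have "0 \<le> energy p x" unfolding energy_def
      by (intro sum_nonneg) (simp add: less_imp_le)
    then show ?thesis using s by simp
  qed
  have bA: "bdd_below (?f ` ?A)"
    by (rule bdd_belowI2[of _ 0]) (erule nn)
  have bB: "bdd_below (?f ` ?B)"
    by (rule bdd_belowI2[of _ 0]) (rule nn, simp)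
  have ex: "\<exists>n\<in>?B. ?f n \<le> ?f m" if "m \<in> ?A" for m
  proof -
    obtain \<kappa> d p x where m: "m = (\<kappa>, d, p, x)" by (cases m) auto
    have mA: "(\<kappa>, d, p, x) \<in> ?A" using that m by simp
    obtain x' where "(\<kappa>, dmin, p, x') \<in> ?A" "energy p x' \<le> energy p x"
      using exists_dmin[OF assms(1-4) assms(6) mA] by blast
    then have "(\<kappa>, dmin, p, x') \<in> ?B" "?f (\<kappa>, dmin, p, x') \<le> ?f m" using m by simp_all
    then show ?thesis by blast
  qed
  show ?thesis
  proof (cases "?A = {}")
    case True then have "?B = {}" by simp
    then show ?thesis using True by simp
  next
    case False
    then obtain m where "m \<in> ?A" by blast
    then obtain n where "n \<in> ?B" using ex by blast
    then have "?B \<noteq> {}" by blast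
    show ?thesis
    proof (rule antisym)
      show "(INF s\<in>?A. ?f s) \<le> (INF s\<in>?B. ?f s)"
        by (rule cINF_mono[OF \<open>?B \<noteq> {}\<close> bA]) (use order_refl in blast)
      show "(INF s\<in>?B. ?f s) \<le> (INF s\<in>?A. ?f s)"
        by (rule cINF_mono[OF False bB]) (use ex in blast)
    qed
  qed
qed

end
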